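(* Let $X$ be a finite simplicial complex, $d\ge0$, and suppose $\ker(B_{d+1})=0$ (there are no nonzero $(d+1)$-cycles). Let $F:C_{d+1}(X)\to C_{d+1}(X)$ be a smooth vector field and $G^{\uparrow}=B_{d+1}FB_{d+1}^\intercal$. Then there is a bijection between the fixed points of the restriction $G^{\uparrow}|_{\operatorname{im}(B_{d+1})}:\operatorname{im}(B_{d+1})\to\operatorname{im}(B_{d+1})$ and those of $F$. If $F$ is moreover componentwise, then this bijection preserves stability, i.e. the numbers of positive, zero and negative eigenvalues of the corresponding linearized systems.
   Context: A finite simplicial complex $X$ on vertex set $\{1,\dots,n\}$ is a collection of nonempty subsets closed under taking nonempty subsets; $X_d$ is the set of simplices with $d+1$ vertices; a $d$-simplex with vertices $i_0<\dots<i_d$ is written $[i_0,\dots,i_d]$. $C_d(X)$ is the real vector space with basis $X_d$ and inner product making $X_d$ orthonormal. The boundary map is $\partial_d[i_0,\dots,i_d]=\sum_{k=0}^d(-1)^k[i_0,\dots,\widehat{i_k},\dots,i_d]$ with matrix $B_d$; $B_d^\intercal$ its transpose. A fixed point of a vector field is a zero of it. $F$ is componentwise if $(F(x))_s$ depends only on $x_s$ for each $s\in X_{d+1}$. *)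

theory Defs
  imports "HOL-Analysis.Analysis"
begin

section \<open>Simplicial complexes and boundary matrices\<close>

text \<open>A finite simplicial complex on vertex set {1..n}: a collection of nonempty
  subsets of {1..n} closed under taking nonempty subsets.\<close>
definition simplicial_complex :: "nat \<Rightarrow> nat set set \<Rightarrow> bool" where
  "simplicial_complex n X \<longleftrightarrow>
     (\<forall>s\<in>X. s \<noteq> {} \<and> s \<subseteq> {1..n}) \<and>
     (\<forall>s\<in>X. \<forall>t. t \<subseteq> s \<and> t \<noteq> {} \<longrightarrow> t \<in> X)"

text \<open>X_d: the d-simplices, i.e. simplices with d+1 vertices.\<close>
definition simplices :: "nat set set \<Rightarrow> nat \<Rightarrow> nat set set" where
  "simplices X d = {s \<in> X. card s = d + 1}"

text \<open>Coefficient of the face t in the boundary of s = [i_0,...,i_k]: if t is s with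
  the vertex i_j removed then (-1)^j, where j = number of vertices of s below i_j;
  otherwise 0.\<close>
definition boundary_coeff :: "nat set \<Rightarrow> nat set \<Rightarrow> real" where
  "boundary_coeff t s =
     (if t \<subseteq> s \<and> card s = card t + 1
      then (-1) ^ card {u \<in> s. u < the_elem (s - t)} else 0)"

text \<open>Matrix of the boundary map C_{d+1}(X) \<rightarrow> C_d(X), where the rows are indexed
  by the d-simplices via the enumeration enum_r and the columns by the (d+1)-simplices
  via the enumeration enum_c (so the standard bases are the simplex bases).\<close>
definition boundary_matrix ::
  "('r::finite \<Rightarrow> nat set) \<Rightarrow> ('c::finite \<Rightarrow> nat set) \<Rightarrow> real^'c^'r" where
  "boundary_matrix enum_r enum_c = (\<chi> i j. boundary_coeff (enum_r i) (enum_c j))"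

section \<open>Smoothness\<close>

text \<open>Iterated directional (Frechet) derivatives of F.\<close>
inductive iter_dderiv :: "('a::real_normed_vector \<Rightarrow> 'b::real_normed_vector) \<Rightarrow> ('a \<Rightarrow> 'b) \<Rightarrow> bool"
  for F where
  base: "iter_dderiv F F"
| step: "iter_dderiv F G \<Longrightarrow> (\<forall>x. G differentiable (at x)) \<Longrightarrow>
         iter_dderiv F (\<lambda>x. frechet_derivative G (at x) v)"

text \<open>F is smooth (C^\<infinity>): all iterated derivatives exist everywhere.\<close>
definition smooth :: "('a::real_normed_vector \<Rightarrow> 'b::real_normed_vector) \<Rightarrow> bool" where
  "smooth F \<longleftrightarrow> (\<forall>G. iter_dderiv F G \<longrightarrow> (\<forall>x. G differentiable (at x)))"

text \<open>Componentwise vector field: (F x)_s depends only on x_s.\<close>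
definition componentwise :: "(real^'n \<Rightarrow> real^'n) \<Rightarrow> bool" where
  "componentwise F \<longleftrightarrow> (\<forall>x y s. x $ s = y $ s \<longrightarrow> F x $ s = F y $ s)"

section \<open>Eigenvalue counts (with algebraic multiplicity) of a linear map on a subspace\<close>

text \<open>Generalized eigenspace of L restricted to the subspace V for the real eigenvalue mu;
  its dimension is the algebraic multiplicity of mu.\<close>
definition gen_eigenspace :: "('a::real_vector \<Rightarrow> 'a) \<Rightarrow> 'a set \<Rightarrow> real \<Rightarrow> 'a set" where
  "gen_eigenspace L V mu = {v \<in> V. \<exists>k. ((\<lambda>w. L w - mu *\<^sub>R w) ^^ k) v = 0}"

text \<open>(number of positive, number of zero, number of negative) eigenvalues of L on V,
  counted with algebraic multiplicity.\<close>
definition inertia :: "('a::euclidean_space \<Rightarrow> 'a) \<Rightarrow> 'a set \<Rightarrow> nat \<times> nat \<times> nat" where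
  "inertia L V =
     (dim (span (\<Union>mu\<in>{mu. mu > 0}. gen_eigenspace L V mu)),
      dim (gen_eigenspace L V 0),
      dim (span (\<Union>mu\<in>{mu. mu < 0}. gen_eigenspace L V mu)))"

end

theory Submission
  imports Defs
begin


definition selfadj :: "('a::real_inner \<Rightarrow> 'a) \<Rightarrow> bool" where
  "selfadj A \<longleftrightarrow> (\<forall>x y. x \<bullet> A y = A x \<bullet> y)"

lemma quad_aux:
  fixes a c :: real
  assumes "a \<ge> 0" "c \<ge> 0" "\<And>t. 2 * t * a + t^2 * c \<ge> 0"
  shows "a = 0"
proof -
  define t where "t = - a / (c + 1)"
  have "2 * t * a + t^2 * c \<ge> 0" by (rule assms(3))
  hence "(c+1)^2 * (2 * t * a + t^2 * c) \<ge> 0" by simp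
  also have "(c+1)^2 * (2 * t * a + t^2 * c) = 2*a*(c+1)*(t*(c+1)) + (t*(c+1))^2*c"
    by (simp add: power2_eq_square algebra_simps)
  also have "t*(c+1) = -a" unfolding t_def using assms by simp
  also have "2*a*(c+1)*(-a) + (-a)^2*c = a^2 * (- c - 2)"
    by (simp add: power2_eq_square algebra_simps)
  finally have "a^2 * (- c - 2) \<ge> 0" .
  with assms show ?thesis
    by (smt (verit) mult_nonneg_nonpos zero_le_power2 power2_eq_square mult_eq_0_iff)
qed

lemma eig_exists:
  fixes A :: "'a::euclidean_space \<Rightarrow> 'a"
  assumes lin: "linear A" and sa: "selfadj A" and sV: "subspace V" and inv: "A ` V \<subseteq> V"
    and nz: "V \<noteq> {0}"
  obtains x lam where "x \<in> V" "norm x = 1" "A x = lam *\<^sub>R x"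
proof -
  define S where "S = V \<inter> sphere 0 1"
  have "compact S" unfolding S_def
    by (metis compact_sphere closed_subspace sV compact_Int_closed inf_commute)
  moreover have "S \<noteq> {}"
  proof -
    obtain v where v: "v \<in> V" "v \<noteq> 0" using nz sV subspace_0 by blast
    have "v /\<^sub>R norm v \<in> S" unfolding S_def using v sV
      by (simp add: subspace_scale)
    thus ?thesis by blast
  qed
  moreover have "continuous_on S (\<lambda>x. x \<bullet> A x)"
    using lin by (intro continuous_intros) (auto simp: linear_conv_bounded_linear intro: linear_continuous_on)
  ultimately obtain x0 where x0: "x0 \<in> S" "\<And>y. y \<in> S \<Longrightarrow> y \<bullet> A y \<le> x0 \<bullet> A x0"
    using continuous_attains_sup[of S "\<lambda>x. x \<bullet> A x"] by blast
  define lam where "lam = x0 \<bullet> A x0"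
  have x0V: "x0 \<in> V" and nx0: "norm x0 = 1" using x0 unfolding S_def by auto
  have x0x0: "x0 \<bullet> x0 = 1" using nx0 by (simp add: dot_square_norm)
  have le: "x \<bullet> A x \<le> lam * (x \<bullet> x)" if "x \<in> V" for x
  proof (cases "x = 0")
    case True thus ?thesis using lin by (simp add: linear_0)
  next
    case False
    define u where "u = x /\<^sub>R norm x"
    have "u \<in> S" unfolding S_def u_def using that False sV by (simp add: subspace_scale)
    hence "u \<bullet> A u \<le> lam" using x0 lam_def by blast
    moreover have "u \<bullet> A u = (x \<bullet> A x) / (x \<bullet> x)"
      unfolding u_def using lin False
      by (simp add: linear_cmul dot_square_norm power2_eq_square field_simps)
    moreover have "x \<bullet> x > 0" using False by simp
    ultimately show ?thesis by (simp add: divide_le_eq mult.commute)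
  qed
  define y where "y = lam *\<^sub>R x0 - A x0"
  have yV: "y \<in> V" unfolding y_def using x0V inv sV
    by (meson image_subset_iff subspace_diff subspace_scale)
  have "y \<bullet> y = 0"
  proof (rule quad_aux)
    show "y \<bullet> y \<ge> 0" by simp
    show "y \<bullet> (lam *\<^sub>R y - A y) \<ge> 0" using le[OF yV] by (simp add: inner_diff_right)
    fix t :: real
    have zV: "x0 + t *\<^sub>R y \<in> V" using x0V yV sV by (simp add: subspace_add subspace_scale)
    have h: "(x0 + t *\<^sub>R y) \<bullet> A (x0 + t *\<^sub>R y) \<le> lam * ((x0 + t *\<^sub>R y) \<bullet> (x0 + t *\<^sub>R y))"
      by (rule le[OF zV])
    have sym: "x0 \<bullet> A y = A x0 \<bullet> y" using sa unfolding selfadj_def by blast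
    have e1: "(x0 + t *\<^sub>R y) \<bullet> A (x0 + t *\<^sub>R y) = x0 \<bullet> A x0 + 2 * t * (A x0 \<bullet> y) + t^2 * (y \<bullet> A y)"
      using lin sym by (simp add: linear_add linear_cmul inner_add_left inner_add_right power2_eq_square algebra_simps inner_commute)
    have e2: "(x0 + t *\<^sub>R y) \<bullet> (x0 + t *\<^sub>R y) = 1 + 2 * t * (x0 \<bullet> y) + t^2 * (y \<bullet> y)"
      using x0x0 by (simp add: inner_add_left inner_add_right power2_eq_square algebra_simps inner_commute)
    have h2: "x0 \<bullet> A x0 + 2 * t * (A x0 \<bullet> y) + t^2 * (y \<bullet> A y) \<le> lam * (1 + 2 * t * (x0 \<bullet> y) + t^2 * (y \<bullet> y))"
      using h unfolding e1 e2 .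
    have "0 \<le> lam * (1 + 2 * t * (x0 \<bullet> y) + t^2 * (y \<bullet> y)) - (x0 \<bullet> A x0 + 2 * t * (A x0 \<bullet> y) + t^2 * (y \<bullet> A y))"
      using h2 by linarith
    also have "\<dots> = 2 * t * (y \<bullet> y) + t^2 * (y \<bullet> (lam *\<^sub>R y - A y))"
      unfolding lam_def y_def by (simp add: inner_diff_left inner_diff_right algebra_simps inner_commute)
    finally show "0 \<le> 2 * t * (y \<bullet> y) + t^2 * (y \<bullet> (lam *\<^sub>R y - A y))" .
  qed
  hence "A x0 = lam *\<^sub>R x0" unfolding y_def by simp
  thus ?thesis using that x0V nx0 by blast
qed

lemma eig_basis:
  fixes A :: "'a::euclidean_space \<Rightarrow> 'a"
  assumes lin: "linear A" and sa: "selfadj A"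
  shows "subspace V \<Longrightarrow> A ` V \<subseteq> V \<Longrightarrow> \<exists>E lam. finite E \<and> E \<subseteq> V \<and> pairwise orthogonal E \<and> 0 \<notin> E
           \<and> span E = V \<and> (\<forall>b\<in>E. A b = lam b *\<^sub>R b)"
proof (induction "dim V" arbitrary: V rule: less_induct)
  case less
  show ?case
  proof (cases "V = {0}")
    case True
    thus ?thesis by (intro exI[of _ "{}"]) auto
  next
    case False
    obtain x0 lam0 where x0: "x0 \<in> V" "norm x0 = 1" "A x0 = lam0 *\<^sub>R x0"
      using eig_exists[OF lin sa less.prems False] by blast
    have x0x0: "x0 \<bullet> x0 = 1" using x0 by (simp add: dot_square_norm)
    define V' where "V' = {x \<in> V. x \<bullet> x0 = 0}"
    have sV': "subspace V'" using less.prems(1) unfolding V'_def subspace_def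
      by (auto simp: inner_add_left)
    have iV': "A ` V' \<subseteq> V'"
    proof
      fix z assume "z \<in> A ` V'"
      then obtain x where x: "x \<in> V'" "z = A x" by blast
      have "A x \<bullet> x0 = x \<bullet> A x0" using sa unfolding selfadj_def by metis
      also have "\<dots> = 0" using x x0 unfolding V'_def by simp
      finally show "z \<in> V'" using x less.prems(2) unfolding V'_def by auto
    qed
    have "dim V' < dim V"
    proof (rule dim_psubset)
      have "x0 \<notin> V'" using x0x0 unfolding V'_def by auto
      moreover have "V' \<subseteq> V" unfolding V'_def by auto
      ultimately have "V' \<subset> V" using x0(1) by blast
      thus "span V' \<subset> span V" using sV' less.prems(1) by (metis span_eq_iff)
    qed
    from less.hyps[OF this sV' iV'] obtain E' lam' where E':
      "finite E'" "E' \<subseteq> V'" "pairwise orthogonal E'" "0 \<notin> E'" "span E' = V'"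
      "\<forall>b\<in>E'. A b = lam' b *\<^sub>R b" by blast
    have x0E': "x0 \<notin> E'" using E'(2) x0x0 unfolding V'_def by auto
    define lam where "lam = lam'(x0 := lam0)"
    show ?thesis
    proof (intro exI[of _ "insert x0 E'"] exI[of _ lam] conjI)
      show "finite (insert x0 E')" using E' by simp
      show "insert x0 E' \<subseteq> V" using E'(2) x0 unfolding V'_def by auto
      show "pairwise orthogonal (insert x0 E')"
        using E'(2,3) unfolding pairwise_insert V'_def
        by (auto simp: orthogonal_def inner_commute)
      show "0 \<notin> insert x0 E'" using E' x0 by auto
      show "span (insert x0 E') = V"
      proof
        show "span (insert x0 E') \<subseteq> V"
          using E'(2) x0 less.prems(1) unfolding V'_def by (intro span_minimal) auto
        show "V \<subseteq> span (insert x0 E')"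
        proof
          fix v assume v: "v \<in> V"
          have "v - (v \<bullet> x0) *\<^sub>R x0 \<in> V'" unfolding V'_def using v x0 x0x0 less.prems(1)
            by (auto simp: inner_diff_left subspace_diff subspace_scale)
          hence "v - (v \<bullet> x0) *\<^sub>R x0 \<in> span (insert x0 E')"
            using E'(5) span_mono[of E' "insert x0 E'"] by auto
          moreover have "(v \<bullet> x0) *\<^sub>R x0 \<in> span (insert x0 E')"
            by (simp add: span_base span_scale)
          ultimately have "(v - (v \<bullet> x0) *\<^sub>R x0) + (v \<bullet> x0) *\<^sub>R x0 \<in> span (insert x0 E')"
            by (rule span_add)
          thus "v \<in> span (insert x0 E')" by simp
        qed
      qed
      show "\<forall>b\<in>insert x0 E'. A b = lam b *\<^sub>R b"
        using E'(6) x0 x0E' unfolding lam_def by auto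
    qed
  qed
qed



definition eigsys :: "('a::euclidean_space \<Rightarrow> 'a) \<Rightarrow> 'a set \<Rightarrow> 'a set \<Rightarrow> ('a \<Rightarrow> real) \<Rightarrow> bool" where
  "eigsys A V E lam \<longleftrightarrow> linear A \<and> selfadj A \<and> finite E \<and> E \<subseteq> V \<and> pairwise orthogonal E \<and> 0 \<notin> E
     \<and> span E = V \<and> (\<forall>b\<in>E. A b = lam b *\<^sub>R b)"

lemma orth_expand:
  fixes E :: "'a::euclidean_space set"
  assumes "finite E" "pairwise orthogonal E" "0 \<notin> E" "v \<in> span E"
  shows "v = (\<Sum>b\<in>E. (v \<bullet> b / (b \<bullet> b)) *\<^sub>R b)"
proof -
  define w where "w = v - (\<Sum>b\<in>E. (v \<bullet> b / (b \<bullet> b)) *\<^sub>R b)"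
  have ws: "w \<in> span E" unfolding w_def
  proof (rule span_diff[OF assms(4)], rule span_sum)
    fix b assume "b \<in> E" thus "(v \<bullet> b / (b \<bullet> b)) *\<^sub>R b \<in> span E" by (intro span_scale span_base)
  qed
  have "orthogonal w c" if c: "c \<in> E" for c
  proof -
    have "(\<Sum>b\<in>E. (v \<bullet> b / (b \<bullet> b)) *\<^sub>R b) \<bullet> c = (\<Sum>b\<in>E. (v \<bullet> b / (b \<bullet> b)) * (b \<bullet> c))"
      by (simp add: inner_sum_left)
    also have "\<dots> = (v \<bullet> c / (c \<bullet> c)) * (c \<bullet> c)"
      using assms(1,2) c
      by (subst sum.remove[of E c]) (auto simp: pairwise_def orthogonal_def intro!: sum.neutral)
    also have "\<dots> = v \<bullet> c" using c assms(3) by auto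
    finally show ?thesis unfolding w_def orthogonal_def by (simp add: inner_diff_left)
  qed
  hence "orthogonal w w" using orthogonal_to_span[OF ws] by blast
  hence "w = 0" by (simp add: orthogonal_def)
  thus ?thesis unfolding w_def by simp
qed

lemma ip_iter:
  assumes "selfadj A" "A b = l *\<^sub>R b"
  shows "((\<lambda>w. A w - mu *\<^sub>R w) ^^ k) v \<bullet> b = (l - mu)^k * (v \<bullet> b)"
proof (induction k)
  case 0 thus ?case by simp
next
  case (Suc k)
  define u where "u = ((\<lambda>w. A w - mu *\<^sub>R w) ^^ k) v"
  have "((\<lambda>w. A w - mu *\<^sub>R w) ^^ Suc k) v \<bullet> b = (A u - mu *\<^sub>R u) \<bullet> b" unfolding u_def by simp
  also have "\<dots> = u \<bullet> A b - mu * (u \<bullet> b)" using assms(1) unfolding selfadj_def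
    by (simp add: inner_diff_left)
  also have "\<dots> = (l - mu) * (u \<bullet> b)" using assms(2) by (simp add: algebra_simps)
  finally show ?case using Suc unfolding u_def by simp
qed

lemma quadform:
  assumes es: "eigsys A V E lam" and w: "w \<in> V"
  shows "w \<bullet> A w = (\<Sum>b\<in>E. lam b * (w \<bullet> b)^2 / (b \<bullet> b))"
proof -
  have E: "linear A" "finite E" "pairwise orthogonal E" "0 \<notin> E" "span E = V" "\<forall>b\<in>E. A b = lam b *\<^sub>R b"
    using es unfolding eigsys_def by auto
  have "w = (\<Sum>b\<in>E. (w \<bullet> b / (b \<bullet> b)) *\<^sub>R b)" using orth_expand[of E w] E w by auto
  hence "A w = (\<Sum>b\<in>E. (w \<bullet> b / (b \<bullet> b)) *\<^sub>R A b)"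
    using E(1) by (metis (no_types, lifting) linear_sum linear_cmul sum.cong)
  also have "\<dots> = (\<Sum>b\<in>E. (w \<bullet> b / (b \<bullet> b) * lam b) *\<^sub>R b)"
    using E(6) by (intro sum.cong) auto
  finally have "w \<bullet> A w = (\<Sum>b\<in>E. (w \<bullet> b / (b \<bullet> b) * lam b) * (w \<bullet> b))"
    by (simp add: inner_sum_right)
  also have "\<dots> = (\<Sum>b\<in>E. lam b * (w \<bullet> b)^2 / (b \<bullet> b))"
    by (intro sum.cong) (auto simp: power2_eq_square)
  finally show ?thesis .
qed

lemma GE_sub:
  assumes es: "eigsys A V E lam"
  shows "gen_eigenspace A V mu \<subseteq> span {b\<in>E. lam b = mu}"
proof
  have E: "linear A" "selfadj A" "finite E" "pairwise orthogonal E" "0 \<notin> E" "span E = V" "\<forall>b\<in>E. A b = lam b *\<^sub>R b"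
    using es unfolding eigsys_def by auto
  fix v assume "v \<in> gen_eigenspace A V mu"
  then obtain k where v: "v \<in> V" "((\<lambda>w. A w - mu *\<^sub>R w) ^^ k) v = 0"
    unfolding gen_eigenspace_def by auto
  have z: "v \<bullet> b = 0" if "b \<in> E" "lam b \<noteq> mu" for b
  proof -
    have "(lam b - mu)^k * (v \<bullet> b) = 0" using ip_iter[OF E(2), where b=b and l="lam b" and mu=mu and k=k and v=v] E(7) that v(2) by simp
    thus ?thesis using that by simp
  qed
  have "v = (\<Sum>b\<in>E. (v \<bullet> b / (b \<bullet> b)) *\<^sub>R b)" using orth_expand[of E v] E v by auto
  also have "\<dots> \<in> span {b\<in>E. lam b = mu}"
  proof (rule span_sum)
    fix b assume "b \<in> E"
    thus "(v \<bullet> b / (b \<bullet> b)) *\<^sub>R b \<in> span {b\<in>E. lam b = mu}"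
      using z by (cases "lam b = mu") (auto intro: span_scale span_base span_zero)
  qed
  finally show "v \<in> span {b\<in>E. lam b = mu}" .
qed

lemma E_in_GE:
  assumes es: "eigsys A V E lam" and b: "b \<in> E"
  shows "b \<in> gen_eigenspace A V (lam b)"
  using es b unfolding eigsys_def gen_eigenspace_def
  by (auto intro!: exI[of _ 1])

lemma dim_sub_card:
  assumes es: "eigsys A V E lam" and "S \<subseteq> E"
  shows "dim (span S) = card S"
proof -
  have "independent S" using es assms(2) unfolding eigsys_def
    by (metis pairwise_orthogonal_independent pairwise_subset subsetD)
  thus ?thesis by (simp add: dim_eq_card_independent)
qed

lemma inertia_eigsys:
  assumes es: "eigsys A V E lam"
  shows "inertia A V = (card {b\<in>E. lam b > 0}, card {b\<in>E. lam b = 0}, card {b\<in>E. lam b < 0})"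
proof -
  have spP: "span (\<Union>mu\<in>{mu. P mu}. gen_eigenspace A V mu) = span {b\<in>E. P (lam b)}" for P
  proof (subst span_eq, intro conjI)
    show "(\<Union>mu\<in>{mu. P mu}. gen_eigenspace A V mu) \<subseteq> span {b\<in>E. P (lam b)}"
    proof
      fix v assume "v \<in> (\<Union>mu\<in>{mu. P mu}. gen_eigenspace A V mu)"
      then obtain mu where "P mu" "v \<in> gen_eigenspace A V mu" by auto
      hence "v \<in> span {b\<in>E. lam b = mu}" using GE_sub[OF es] by blast
      moreover have "span {b\<in>E. lam b = mu} \<subseteq> span {b\<in>E. P (lam b)}"
        using \<open>P mu\<close> by (intro span_mono) auto
      ultimately show "v \<in> span {b\<in>E. P (lam b)}" by blast
    qed
    show "{b\<in>E. P (lam b)} \<subseteq> span (\<Union>mu\<in>{mu. P mu}. gen_eigenspace A V mu)"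
      using E_in_GE[OF es] by (auto intro!: span_base)
  qed
  have "dim (span (\<Union>mu\<in>{mu. mu > 0}. gen_eigenspace A V mu)) = card {b\<in>E. lam b > 0}"
    using spP[of "\<lambda>mu. mu > 0"] dim_sub_card[OF es] by simp
  moreover have "dim (span (\<Union>mu\<in>{mu. mu < 0}. gen_eigenspace A V mu)) = card {b\<in>E. lam b < 0}"
    using spP[of "\<lambda>mu. mu < 0"] dim_sub_card[OF es] by simp
  moreover have "dim (gen_eigenspace A V 0) = card {b\<in>E. lam b = 0}"
    using spP[of "\<lambda>mu. mu = 0"] dim_sub_card[OF es] dim_span[of "gen_eigenspace A V 0"] by simp
  ultimately show ?thesis unfolding inertia_def by simp
qed



lemma maxdim:
  assumes es: "eigsys A V E lam" and WV: "W \<subseteq> V" and sW: "subspace W"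
    and pd: "\<And>w. w \<in> W \<Longrightarrow> w \<noteq> 0 \<Longrightarrow> \<sigma> * (w \<bullet> A w) > 0"
  shows "dim W \<le> card {b\<in>E. \<sigma> * lam b > 0}"
proof -
  have E: "linear A" "finite E" "pairwise orthogonal E" "0 \<notin> E" "span E = V" "\<forall>b\<in>E. A b = lam b *\<^sub>R b"
    using es unfolding eigsys_def by auto
  define P where "P = {b\<in>E. \<sigma> * lam b > 0}"
  have PE: "P \<subseteq> E" unfolding P_def by auto
  have oP: "\<forall>x\<in>P. \<forall>y\<in>P. x \<noteq> y \<longrightarrow> x \<bullet> y = 0" using E(3) PE by (auto simp: pairwise_def orthogonal_def)
  define \<pi> where "\<pi> = (\<lambda>w. \<Sum>b\<in>P. (w \<bullet> b / (b \<bullet> b)) *\<^sub>R b)"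
  have lin: "linear \<pi>" unfolding \<pi>_def
    by (rule linearI) (simp_all add: inner_add_left add_divide_distrib scaleR_add_left sum.distrib scaleR_sum_right)
  have ip: "\<pi> w \<bullet> c = w \<bullet> c" if "c \<in> P" for w c
  proof -
    have "\<pi> w \<bullet> c = (\<Sum>b\<in>P. (w \<bullet> b / (b \<bullet> b)) * (b \<bullet> c))"
      unfolding \<pi>_def by (simp add: inner_sum_left)
    also have "\<dots> = (w \<bullet> c / (c \<bullet> c)) * (c \<bullet> c)"
      using oP that finite_subset[OF PE E(2)]
      by (subst sum.remove[of P c]) (auto intro!: sum.neutral)
    also have "\<dots> = w \<bullet> c" using that PE E(4) by auto
    finally show ?thesis .
  qed
  have inj: "inj_on \<pi> W"
    unfolding linear_injective_on_subspace_0[OF lin sW]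
  proof (intro ballI impI)
    fix w assume w: "w \<in> W" "\<pi> w = 0"
    have z: "w \<bullet> b = 0" if "b \<in> P" for b using ip[OF that, of w] w(2) by simp
    have "w \<bullet> A w = (\<Sum>b\<in>E. lam b * (w \<bullet> b)^2 / (b \<bullet> b))" using quadform[OF es] w WV by blast
    hence "\<sigma> * (w \<bullet> A w) = (\<Sum>b\<in>E. \<sigma> * lam b * (w \<bullet> b)^2 / (b \<bullet> b))"
      by (simp add: sum_distrib_left mult.assoc)
    also have "\<dots> \<le> 0"
    proof (rule sum_nonpos)
      fix b assume b: "b \<in> E"
      show "\<sigma> * lam b * (w \<bullet> b)^2 / (b \<bullet> b) \<le> 0"
      proof (cases "b \<in> P")
        case True thus ?thesis using z by simp
      next
        case False
        hence "\<sigma> * lam b \<le> 0" using b unfolding P_def by auto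
        hence "\<sigma> * lam b * (w \<bullet> b)^2 \<le> 0" by (simp add: mult_nonpos_nonneg)
        thus ?thesis by (simp add: divide_nonpos_nonneg)
      qed
    qed
    finally show "w = 0" using pd[OF w(1)] by fastforce
  qed
  have "dim W = dim (\<pi> ` W)"
    using dim_image_eq[OF lin, of W] inj sW by (simp add: span_eq_iff[THEN iffD2])
  also have "\<dots> \<le> dim (span P)"
  proof (rule dim_subset, rule subsetI)
    fix z assume "z \<in> \<pi> ` W"
    then obtain w where "z = \<pi> w" by blast
    thus "z \<in> span P" unfolding \<pi>_def
      by (simp add: span_sum span_scale span_base)
  qed
  also have "\<dots> = card P" using dim_sub_card[OF es PE] .
  finally show ?thesis unfolding P_def .
qed

lemma attained:
  fixes \<sigma> :: real
  assumes es: "eigsys A V E lam"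
  defines "P \<equiv> {b\<in>E. \<sigma> * lam b > 0}"
  shows "span P \<subseteq> V" "subspace (span P)" "dim (span P) = card P"
    "\<And>w. w \<in> span P \<Longrightarrow> w \<noteq> 0 \<Longrightarrow> \<sigma> * (w \<bullet> A w) > 0"
proof -
  have E: "linear A" "finite E" "pairwise orthogonal E" "0 \<notin> E" "span E = V" "\<forall>b\<in>E. A b = lam b *\<^sub>R b"
    using es unfolding eigsys_def by auto
  have PE: "P \<subseteq> E" unfolding P_def by auto
  show "span P \<subseteq> V" using E(5) PE span_mono by blast
  show "subspace (span P)" by simp
  show "dim (span P) = card P" using dim_sub_card[OF es PE] .
  fix w assume w: "w \<in> span P" "w \<noteq> 0"
  have wV: "w \<in> V" using w E(5) PE span_mono by blast
  have z: "w \<bullet> b = 0" if "b \<in> E" "b \<notin> P" for b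
  proof -
    have "orthogonal b w"
      using orthogonal_to_span[OF w(1), of b] that PE E(3)
      by (metis pairwise_def subsetD)
    thus ?thesis by (simp add: orthogonal_def inner_commute)
  qed
  obtain c where c: "c \<in> E" "w \<bullet> c \<noteq> 0"
  proof -
    have "w = (\<Sum>b\<in>E. (w \<bullet> b / (b \<bullet> b)) *\<^sub>R b)" using orth_expand[of E w] E wV by auto
    with w(2) have "\<exists>c\<in>E. w \<bullet> c \<noteq> 0" by (metis (no_types, lifting) sum.neutral div_0 scale_zero_left)
    thus ?thesis using that by blast
  qed
  have cP: "c \<in> P" using z c by blast
  have "w \<bullet> A w = (\<Sum>b\<in>E. lam b * (w \<bullet> b)^2 / (b \<bullet> b))" using quadform[OF es wV] .
  hence "\<sigma> * (w \<bullet> A w) = (\<Sum>b\<in>E. \<sigma> * lam b * (w \<bullet> b)^2 / (b \<bullet> b))"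
    by (simp add: sum_distrib_left mult.assoc)
  also have "\<dots> > 0"
  proof (rule sum_pos2[OF E(2) c(1)])
    have "\<sigma> * lam c > 0" using cP unfolding P_def by auto
    moreover have "c \<bullet> c > 0" using c E(4) by auto
    ultimately show "0 < \<sigma> * lam c * (w \<bullet> c)\<^sup>2 / (c \<bullet> c)" using c(2) by simp
    fix b assume b: "b \<in> E"
    show "0 \<le> \<sigma> * lam b * (w \<bullet> b)\<^sup>2 / (b \<bullet> b)"
    proof (cases "b \<in> P")
      case True thus ?thesis unfolding P_def by simp
    next
      case False thus ?thesis using z b by simp
    qed
  qed
  finally show "\<sigma> * (w \<bullet> A w) > 0" .
qed

lemma card_split3:
  assumes "finite E"
  shows "card E = card {b\<in>E. (l b::real) > 0} + card {b\<in>E. l b = 0} + card {b\<in>E. l b < 0}"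
proof -
  have "E = ({b\<in>E. l b > 0} \<union> {b\<in>E. l b = 0}) \<union> {b\<in>E. l b < 0}" by auto
  hence "card E = card (({b\<in>E. l b > 0} \<union> {b\<in>E. l b = 0}) \<union> {b\<in>E. l b < 0})" by simp
  also have "\<dots> = card ({b\<in>E. l b > 0} \<union> {b\<in>E. l b = 0}) + card {b\<in>E. l b < 0}"
    using assms by (intro card_Un_disjoint) auto
  also have "card ({b\<in>E. l b > 0} \<union> {b\<in>E. l b = 0}) = card {b\<in>E. l b > 0} + card {b\<in>E. l b = 0}"
    using assms by (intro card_Un_disjoint) auto
  finally show ?thesis .
qed

lemma card_sigma_le:
  fixes \<sigma> :: real
  assumes es1: "eigsys A1 V1 E1 l1" and es2: "eigsys A2 V2 E2 l2"
    and lT: "linear T" and iT: "inj_on T V1" and TV: "T ` V1 \<subseteq> V2"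
    and q: "\<And>v. v \<in> V1 \<Longrightarrow> T v \<bullet> A2 (T v) = v \<bullet> A1 v"
  shows "card {b\<in>E1. \<sigma> * l1 b > 0} \<le> card {b\<in>E2. \<sigma> * l2 b > 0}"
proof -
  define W where "W = span {b\<in>E1. \<sigma> * l1 b > 0}"
  note at = attained[OF es1, where \<sigma>=\<sigma>, folded W_def]
  have iW: "inj_on T (span W)" using at(1) iT unfolding W_def by (metis span_span inj_on_subset)
  have "card {b\<in>E1. \<sigma> * l1 b > 0} = dim W" using at(3) by simp
  also have "\<dots> = dim (T ` W)" using dim_image_eq[OF lT iW] by simp
  also have "\<dots> \<le> card {b\<in>E2. \<sigma> * l2 b > 0}"
  proof (rule maxdim[OF es2])
    show "T ` W \<subseteq> V2" using at(1) TV by blast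
    show "subspace (T ` W)" using at(2) lT by (simp add: linear_subspace_image)
    fix z assume z: "z \<in> T ` W" "z \<noteq> 0"
    then obtain w where w: "w \<in> W" "z = T w" by blast
    have "w \<noteq> 0" using z w lT by (auto simp: linear_0)
    hence "\<sigma> * (w \<bullet> A1 w) > 0" using at(4) w by blast
    thus "\<sigma> * (z \<bullet> A2 z) > 0" using q[of w] w at(1) by auto
  qed
  finally show ?thesis .
qed

lemma card_sigma_ge:
  fixes \<sigma> :: real
  assumes es1: "eigsys A1 V1 E1 l1" and es2: "eigsys A2 V2 E2 l2"
    and lT: "linear T" and iT: "inj_on T V1" and TV: "T ` V1 = V2"
    and q: "\<And>v. v \<in> V1 \<Longrightarrow> T v \<bullet> A2 (T v) = v \<bullet> A1 v"
  shows "card {b\<in>E2. \<sigma> * l2 b > 0} \<le> card {b\<in>E1. \<sigma> * l1 b > 0}"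
proof -
  define W where "W = span {b\<in>E2. \<sigma> * l2 b > 0}"
  note at = attained[OF es2, where \<sigma>=\<sigma>, folded W_def]
  have sV1: "subspace V1" using es1 unfolding eigsys_def by (metis subspace_span)
  define W1 where "W1 = V1 \<inter> T -` W"
  have sW1: "subspace W1" unfolding W1_def
    using sV1 at(2) lT by (intro subspace_inter linear_subspace_vimage) auto
  have TW1: "T ` W1 = W"
  proof
    show "T ` W1 \<subseteq> W" unfolding W1_def by auto
    show "W \<subseteq> T ` W1"
    proof
      fix z assume "z \<in> W"
      moreover then obtain v where "v \<in> V1" "z = T v" using at(1) TV by blast
      ultimately show "z \<in> T ` W1" unfolding W1_def by auto
    qed
  qed
  have iW: "inj_on T (span W1)" using sW1 iT unfolding W1_def
    by (metis inf_le1 inj_on_subset span_eq_iff)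
  have "card {b\<in>E2. \<sigma> * l2 b > 0} = dim W" using at(3) by simp
  also have "\<dots> = dim W1" using dim_image_eq[OF lT iW] TW1 by simp
  also have "\<dots> \<le> card {b\<in>E1. \<sigma> * l1 b > 0}"
  proof (rule maxdim[OF es1])
    show "W1 \<subseteq> V1" unfolding W1_def by auto
    show "subspace W1" by fact
    fix w assume w: "w \<in> W1" "w \<noteq> 0"
    have "0 \<in> V1" using sV1 by (simp add: subspace_0)
    hence "T w \<noteq> 0" using w iT lT unfolding W1_def by (metis IntD1 inj_on_def linear_0)
    moreover have "T w \<in> W" using w unfolding W1_def by auto
    ultimately have "\<sigma> * (T w \<bullet> A2 (T w)) > 0" using at(4) by blast
    thus "\<sigma> * (w \<bullet> A1 w) > 0" using q[of w] w unfolding W1_def by auto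
  qed
  finally show ?thesis .
qed

lemma congr_inertia:
  assumes es1: "eigsys A1 V1 E1 l1" and es2: "eigsys A2 V2 E2 l2"
    and lT: "linear T" and iT: "inj_on T V1" and TV: "T ` V1 = V2"
    and q: "\<And>v. v \<in> V1 \<Longrightarrow> T v \<bullet> A2 (T v) = v \<bullet> A1 v"
  shows "inertia A1 V1 = inertia A2 V2"
proof -
  have cs: "card {b\<in>E1. \<sigma> * l1 b > 0} = card {b\<in>E2. \<sigma> * l2 b > 0}" for \<sigma> :: real
    using card_sigma_le[OF es1 es2 lT iT _ q, of \<sigma>] card_sigma_ge[OF es1 es2 lT iT TV q, of \<sigma>] TV
    by (intro antisym) auto
  have p: "card {b\<in>E1. l1 b > 0} = card {b\<in>E2. l2 b > 0}" using cs[of 1] by simp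
  have n: "card {b\<in>E1. l1 b < 0} = card {b\<in>E2. l2 b < 0}" using cs[of "-1"] by simp
  have sV1: "subspace V1" using es1 unfolding eigsys_def by (metis subspace_span)
  have c1: "card E1 = dim V1" using dim_sub_card[OF es1, of E1] es1 unfolding eigsys_def by auto
  have c2: "card E2 = dim V2" using dim_sub_card[OF es2, of E2] es2 unfolding eigsys_def by auto
  have "dim V2 = dim V1" unfolding TV[symmetric]
    by (rule dim_image_eq[OF lT]) (use sV1 iT in \<open>simp add: span_eq_iff[THEN iffD2]\<close>)
  hence "card E1 = card E2" using c1 c2 by simp
  moreover have "finite E1" "finite E2" using es1 es2 unfolding eigsys_def by auto
  ultimately have z: "card {b\<in>E1. l1 b = 0} = card {b\<in>E2. l2 b = 0}"
    using card_split3[of E1 l1] card_split3[of E2 l2] p n by simp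
  show ?thesis using inertia_eigsys[OF es1] inertia_eigsys[OF es2] p n z by simp
qed



lemma transp_inner: "u \<bullet> ((B::real^'c^'r) *v w) = (transpose B *v u) \<bullet> w"
  by (metis dot_lmul_matrix transpose_transpose vector_transpose_matrix)

lemma cw_deriv:
  fixes F :: "real^'c \<Rightarrow> real^'c"
  assumes cw: "componentwise F" and d: "(F has_derivative J) (at y)"
  shows "J h $ s = h $ s * J (axis s 1) $ s"
proof -
  have blJ: "bounded_linear J" using d by (rule has_derivative_bounded_linear)
  hence lJ: "linear J" by (simp add: bounded_linear.linear)
  define h' where "h' = (h $ s) *\<^sub>R axis s (1::real)"
  have path: "((\<lambda>t::real. y + t *\<^sub>R k) has_derivative (\<lambda>t. t *\<^sub>R k)) (at 0)" for k :: "real^'c"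
    by (auto intro!: derivative_eq_intros)
  have comp: "((\<lambda>t::real. F (y + t *\<^sub>R k) $ s) has_derivative (\<lambda>t. J (t *\<^sub>R k) $ s)) (at 0)" for k
  proof -
    have "((\<lambda>t::real. F (y + t *\<^sub>R k)) has_derivative (\<lambda>t. J (t *\<^sub>R k))) (at 0)"
      using has_derivative_compose[OF path[of k], of F J] d by simp
    from has_derivative_compose[OF this bounded_linear_imp_has_derivative[OF bounded_linear_vec_nth[of s]]]
    show ?thesis by simp
  qed
  have eqf: "(\<lambda>t::real. F (y + t *\<^sub>R h) $ s) = (\<lambda>t. F (y + t *\<^sub>R h') $ s)"
  proof
    fix t :: real
    have "(y + t *\<^sub>R h) $ s = (y + t *\<^sub>R h') $ s" unfolding h'_def by simp
    thus "F (y + t *\<^sub>R h) $ s = F (y + t *\<^sub>R h') $ s" using cw unfolding componentwise_def by blast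
  qed
  have "(\<lambda>t. J (t *\<^sub>R h) $ s) = (\<lambda>t. J (t *\<^sub>R h') $ s)"
    using has_derivative_unique[OF comp[of h]] comp[of h'] unfolding eqf by blast
  hence "J h $ s = J h' $ s" by (metis scaleR_one)
  also have "\<dots> = h $ s * J (axis s 1) $ s" unfolding h'_def using lJ by (simp add: linear_cmul)
  finally show ?thesis .
qed

lemma cw_selfadj:
  fixes F :: "real^'c \<Rightarrow> real^'c"
  assumes cw: "componentwise F" and d: "(F has_derivative J) (at y)"
  shows "selfadj J"
proof -
  define dd where "dd s = J (axis s 1) $ s" for s
  have e: "J h $ s = h $ s * dd s" for h s unfolding dd_def by (rule cw_deriv[OF cw d])
  show ?thesis unfolding selfadj_def inner_vec_def by (simp add: e mult_ac)
qed



theorem mainTheorem11: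
  fixes n d :: nat and X :: "nat set set"
    and enum_r :: "'r::finite \<Rightarrow> nat set" and enum_c :: "'c::finite \<Rightarrow> nat set"
    and F :: "real^'c \<Rightarrow> real^'c"
  assumes "simplicial_complex n X"
    and "bij_betw enum_r UNIV (simplices X d)"
    and "bij_betw enum_c UNIV (simplices X (Suc d))"
    and "{z. boundary_matrix enum_r enum_c *v z = 0} = {0}"
    and "smooth F"
  shows "let B = boundary_matrix enum_r enum_c;
             G = (\<lambda>x. B *v F (transpose B *v x));
             V = range (\<lambda>z. B *v z)
         in \<exists>\<phi>. bij_betw \<phi> {x \<in> V. G x = 0} {y. F y = 0} \<and>
                (componentwise F \<longrightarrow>
                   (\<forall>x \<in> {x \<in> V. G x = 0}.
                      inertia (frechet_derivative G (at x)) V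
                        = inertia (frechet_derivative F (at (\<phi> x))) UNIV))"
proof -
  define B where "B = boundary_matrix enum_r enum_c"
  define Bt where "Bt = transpose B"
  define G where "G = (\<lambda>x. B *v F (Bt *v x))"
  define V where "V = range (\<lambda>z. B *v z)"
  have ker: "\<And>z. B *v z = 0 \<Longrightarrow> z = 0" using assms(4) unfolding B_def by blast
  have Fd: "\<And>y. (F has_derivative frechet_derivative F (at y)) (at y)"
    using assms(5) unfolding smooth_def by (metis iter_dderiv.base frechet_derivative_works)
  have Gd: "(G has_derivative (\<lambda>h. B *v frechet_derivative F (at (Bt *v x)) (Bt *v h))) (at x)" for x
  proof -
    have "((\<lambda>x. F (Bt *v x)) has_derivative (\<lambda>h. frechet_derivative F (at (Bt *v x)) (Bt *v h))) (at x)"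
      by (rule has_derivative_compose[OF bounded_linear_imp_has_derivative[OF matrix_vector_mul_bounded_linear] Fd])
    from has_derivative_compose[OF this bounded_linear_imp_has_derivative[OF matrix_vector_mul_bounded_linear[of B]]]
    show ?thesis unfolding G_def .
  qed
  have GD: "frechet_derivative G (at x) = (\<lambda>h. B *v frechet_derivative F (at (Bt *v x)) (Bt *v h))" for x
    using frechet_derivative_at[OF Gd] by simp
  have linB: "linear ((*v) B)" and linBt: "linear ((*v) Bt)" by (simp_all add: matrix_vector_mul_linear)
  have sV: "subspace V" unfolding V_def
    using linear_subspace_image[OF linB subspace_UNIV] by simp
  have Vker: "x = 0" if xV: "x \<in> V" and x0: "Bt *v x = 0" for x
  proof -
    obtain z where z: "x = B *v z" using xV unfolding V_def by blast
    have "x \<bullet> x = (Bt *v x) \<bullet> z" unfolding Bt_def using transp_inner[of x B z] z by simp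
    thus ?thesis using x0 by simp
  qed
  have injV: "inj_on ((*v) Bt) V"
    using linear_injective_on_subspace_0[OF linBt sV] Vker by blast
  have surjBB: "\<exists>z. Bt *v (B *v z) = y" for y
  proof -
    have lin: "linear (\<lambda>z. Bt *v (B *v z))" using linB linBt by (simp add: linear_compose[unfolded o_def])
    have "inj (\<lambda>z. Bt *v (B *v z))"
      unfolding linear_injective_0[OF lin]
    proof (intro allI impI)
      fix z assume "Bt *v (B *v z) = 0"
      hence "B *v z = 0" using Vker unfolding V_def by blast
      thus "z = 0" by (rule ker)
    qed
    from linear_inj_imp_surj[OF lin this] show ?thesis by (metis surjD)
  qed
  have imgV: "(*v) Bt ` V = UNIV"
  proof (rule set_eqI, rule iffI)
    fix y :: "real^'c" 
    obtain z where "Bt *v (B *v z) = y" using surjBB by blast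
    thus "y \<in> (*v) Bt ` V" unfolding V_def by blast
  qed simp
  have zeroG: "G x = 0 \<longleftrightarrow> F (Bt *v x) = 0" for x
    unfolding G_def using ker by (auto simp: matrix_vector_mult_0_right)
  have bij: "bij_betw ((*v) Bt) {x \<in> V. G x = 0} {y. F y = 0}"
    unfolding bij_betw_def
  proof
    show "inj_on ((*v) Bt) {x \<in> V. G x = 0}" using injV by (rule inj_on_subset) auto
    show "(*v) Bt ` {x \<in> V. G x = 0} = {y. F y = 0}"
    proof
      show "(*v) Bt ` {x \<in> V. G x = 0} \<subseteq> {y. F y = 0}" using zeroG by auto
      show "{y. F y = 0} \<subseteq> (*v) Bt ` {x \<in> V. G x = 0}"
      proof
        fix y assume y: "y \<in> {y. F y = 0}"
        obtain z where z: "Bt *v (B *v z) = y" using surjBB by blast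
        have "B *v z \<in> {x \<in> V. G x = 0}" using z y zeroG unfolding V_def by auto
        thus "y \<in> (*v) Bt ` {x \<in> V. G x = 0}" using z by force
      qed
    qed
  qed
  have inert: "inertia (frechet_derivative G (at x)) V = inertia (frechet_derivative F (at (Bt *v x))) UNIV"
    if cw: "componentwise F" and x: "x \<in> {x \<in> V. G x = 0}" for x
  proof -
    define J where "J = frechet_derivative F (at (Bt *v x))"
    define A1 where "A1 = (\<lambda>h. B *v J (Bt *v h))"
    have lJ: "linear J" unfolding J_def
      using has_derivative_bounded_linear[OF Fd] bounded_linear.linear by blast
    have saJ: "selfadj J" unfolding J_def by (rule cw_selfadj[OF cw Fd])
    have lA1: "linear A1" unfolding A1_def J_def
      using has_derivative_bounded_linear[OF Gd[of x]] bounded_linear.linear by blast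
    have saA1: "selfadj A1" unfolding selfadj_def A1_def
    proof (intro allI)
      fix u v :: "real^'r"
      have "u \<bullet> (B *v J (Bt *v v)) = (Bt *v u) \<bullet> J (Bt *v v)" unfolding Bt_def by (rule transp_inner)
      also have "\<dots> = J (Bt *v u) \<bullet> (Bt *v v)" using saJ unfolding selfadj_def by blast
      also have "\<dots> = v \<bullet> (B *v J (Bt *v u))" unfolding Bt_def by (simp add: transp_inner inner_commute)
      finally show "u \<bullet> (B *v J (Bt *v v)) = (B *v J (Bt *v u)) \<bullet> v" by (simp add: inner_commute)
    qed
    have invV: "A1 ` V \<subseteq> V" unfolding A1_def V_def by auto
    obtain E1 l1 where es1: "eigsys A1 V E1 l1"
      using eig_basis[OF lA1 saA1 sV invV] lA1 saA1 unfolding eigsys_def by blast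
    obtain E2 l2 where es2: "eigsys J UNIV E2 l2"
      using eig_basis[OF lJ saJ subspace_UNIV] lJ saJ unfolding eigsys_def by blast
    have q: "(Bt *v v) \<bullet> J (Bt *v v) = v \<bullet> A1 v" for v
      unfolding A1_def Bt_def by (simp add: transp_inner)
    have "inertia A1 V = inertia J UNIV"
      by (rule congr_inertia[OF es1 es2 linBt injV imgV q])
    thus ?thesis unfolding GD J_def A1_def .
  qed
  have "\<exists>\<phi>. bij_betw \<phi> {x \<in> V. G x = 0} {y. F y = 0} \<and>
                (componentwise F \<longrightarrow>
                   (\<forall>x \<in> {x \<in> V. G x = 0}.
                      inertia (frechet_derivative G (at x)) V
                        = inertia (frechet_derivative F (at (\<phi> x))) UNIV))"
    using bij inert by blast
  thus ?thesis unfolding Let_def B_def Bt_def G_def V_def by simp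
qed

end
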